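(* Consider the Single-Demand Facility Location setting with $n$ facilities $F=[n]$, positive capacities $s_1,\dots,s_n$ and demand $D>0$. Let $\mathcal{R}=\{(x^1,y^1),\dots,(x^r,y^r)\}$ be the set of all canonical feasible solutions. Then every feasible solution $(x,y)$ can be written as $(x,y)=\sum_{k=1}^r\lambda_k(x^k,y^k)$ with $\lambda_k\geqslant 0$ for all $k$ and $\sum_{k=1}^r\lambda_k=1$.
   Context: A feasible solution is a pair $(x,y)$ with $y\in\{0,1\}^n$ and $x\in[0,1]^n$ such that $\sum_{i=1}^n x_i=1$ and $0\leqslant x_iD\leqslant y_is_i$ for all $i\in F$. For a feasible solution let $B=\{i\in F: y_i=1\}$ and $\widetilde{F}_2=\{i\in B: 0<x_iD<s_iy_i\}$. A feasible solution is canonical if $|\widetilde{F}_2|\leqslant 1$, i.e. at most one facility supplies a nonzero amount strictly below its capacity. (The set $\mathcal{R}$ is finite.) *)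

theory Defs
  imports "HOL-Analysis.Analysis"
begin

text \<open>Facilities F = [n] are modelled by a finite index type 'n (n = CARD('n)).
  A solution is a pair (x, y) of vectors in real^'n; y is 0/1-valued.\<close>

definition feasible :: "real^'n \<Rightarrow> real \<Rightarrow> real^'n \<Rightarrow> real^'n \<Rightarrow> bool" where
  "feasible s D x y \<longleftrightarrow>
     (\<forall>i. y$i \<in> {0, 1}) \<and> (\<forall>i. 0 \<le> x$i \<and> x$i \<le> 1) \<and>
     (\<Sum>i\<in>UNIV. x$i) = 1 \<and>
     (\<forall>i. 0 \<le> x$i * D \<and> x$i * D \<le> y$i * s$i)"

definition open_facilities :: "real^'n \<Rightarrow> 'n set" where
  "open_facilities y = {i. y$i = 1}"

definition F2_tilde :: "real^'n \<Rightarrow> real \<Rightarrow> real^'n \<Rightarrow> real^'n \<Rightarrow> 'n set" where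
  "F2_tilde s D x y = {i \<in> open_facilities y. 0 < x$i * D \<and> x$i * D < s$i * y$i}"

definition canonical :: "real^'n \<Rightarrow> real \<Rightarrow> real^'n \<Rightarrow> real^'n \<Rightarrow> bool" where
  "canonical s D x y \<longleftrightarrow> feasible s D x y \<and> card (F2_tilde s D x y) \<le> 1"

definition canonical_set :: "real^'n \<Rightarrow> real \<Rightarrow> ((real^'n) \<times> (real^'n)) set" where
  "canonical_set s D = {p. canonical s D (fst p) (snd p)}"

end

theory Submission
  imports Defs
begin

lemma canon_finite:
  fixes s :: "real^'n"
  assumes D: "D > 0"
  shows "finite (canonical_set s D)"
proof -
  let ?f = "\<lambda>p::(real^'n)\<times>(real^'n). (open_facilities (snd p), {i. fst p $ i = 0}, F2_tilde s D (fst p) (snd p))"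
  have "inj_on ?f (canonical_set s D)"
  proof (rule inj_onI)
    fix p q assume p: "p \<in> canonical_set s D" and q: "q \<in> canonical_set s D" and e: "?f p = ?f q"
    obtain x y where pxy: "p = (x,y)" by force
    obtain x' y' where qxy: "q = (x',y')" by force
    have cp: "canonical s D x y" and cq: "canonical s D x' y'" using p q pxy qxy by (auto simp: canonical_set_def)
    hence fp: "feasible s D x y" and fq: "feasible s D x' y'" and c1: "card (F2_tilde s D x y) \<le> 1"
      by (auto simp: canonical_def)
    have e1: "open_facilities y = open_facilities y'" and e2: "{i. x$i = 0} = {i. x'$i = 0}"
      and e3: "F2_tilde s D x y = F2_tilde s D x' y'" using e pxy qxy by auto
    have yy: "y = y'"
    proof (subst vec_eq_iff, intro allI)
      fix i
      have "y$i \<in> {0,1}" "y'$i \<in> {0,1}" using fp fq by (auto simp: feasible_def)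
      moreover have "(y$i = 1) = (y'$i = 1)" using e1 by (auto simp: open_facilities_def set_eq_iff)
      ultimately show "y$i = y'$i" by auto
    qed
    have off: "x$k = x'$k" if k: "k \<notin> F2_tilde s D x y" for k
    proof -
      have k': "k \<notin> F2_tilde s D x' y" using k e3 yy by simp
      have A: "x$k = 0 \<or> x$k * D = s$k * y$k" if f: "feasible s D x y" and kk: "k \<notin> F2_tilde s D x y" for x
      proof -
        have "y$k \<in> {0,1}" "0 \<le> x$k * D" "x$k * D \<le> y$k * s$k" using f by (auto simp: feasible_def)
        moreover have "x$k * D = 0 \<Longrightarrow> x$k = 0" using D by simp
        ultimately show ?thesis using kk by (auto simp: F2_tilde_def open_facilities_def)
      qed
      have "x$k = 0 \<or> x$k * D = s$k * y$k" using A[OF fp k] .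
      moreover have "x'$k = 0 \<or> x'$k * D = s$k * y$k" using A[OF _ k'] fq yy by simp
      moreover have "(x$k = 0) = (x'$k = 0)" using e2 by (auto simp: set_eq_iff)
      ultimately show ?thesis using D
        by (metis mult_right_cancel less_irrefl)
    qed
    have "x = x'"
    proof (cases "F2_tilde s D x y = {}")
      case True thus ?thesis using off by (simp add: vec_eq_iff)
    next
      case False
      have fin: "finite (F2_tilde s D x y)" by simp
      then obtain j where j: "F2_tilde s D x y = {j}" using False c1
        by (metis One_nat_def card_1_singletonE card_0_eq le_Suc_eq le_zero_eq)
      have s1: "(\<Sum>i\<in>UNIV. x$i) = 1" "(\<Sum>i\<in>UNIV. x'$i) = 1" using fp fq by (auto simp: feasible_def)
      have "(\<Sum>i\<in>UNIV. x$i) = x$j + (\<Sum>i\<in>UNIV-{j}. x$i)" by (simp add: sum.remove)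
      moreover have "(\<Sum>i\<in>UNIV. x'$i) = x'$j + (\<Sum>i\<in>UNIV-{j}. x'$i)" by (simp add: sum.remove)
      moreover have "(\<Sum>i\<in>UNIV-{j}. x$i) = (\<Sum>i\<in>UNIV-{j}. x'$i)"
        using off j by (intro sum.cong) auto
      ultimately have "x$j = x'$j" using s1 by linarith
      thus ?thesis using off j by (metis singletonD vec_eq_iff)
    qed
    thus "p = q" using pxy qxy yy by simp
  qed
  moreover have "finite (UNIV :: ('n set \<times> 'n set \<times> 'n set) set)" by simp
  ultimately show ?thesis by (meson finite_imageD finite_subset subset_UNIV)
qed


lemma move:
  fixes s x y :: "real^'n" and D t :: real and i j :: 'n
  defines "x' \<equiv> x + t *\<^sub>R (\<chi> k. (if k = i then 1 else 0) - (if k = j then 1 else 0))"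
  assumes D: "D > 0" and f: "feasible s D x y" and i: "i \<in> F2_tilde s D x y"
    and j: "j \<in> F2_tilde s D x y" and ij: "i \<noteq> j"
    and t1: "0 \<le> x$i + t" "x$i + t \<le> s$i / D" "0 \<le> x$j - t" "x$j - t \<le> s$j / D"
    and t2: "x$i + t = 0 \<or> x$i + t = s$i / D \<or> x$j - t = 0 \<or> x$j - t = s$j / D"
  shows "feasible s D x' y \<and> F2_tilde s D x' y \<subset> F2_tilde s D x y"
proof -
  have comp: "x'$k = (if k = i then x$i + t else if k = j then x$j - t else x$k)" for k
    using ij by (auto simp: x'_def)
  have yi: "y$i = 1" "y$j = 1" using i j by (auto simp: F2_tilde_def open_facilities_def)
  have le: "a * D \<le> s$k" if "a \<le> s$k / D" for a k using that D by (simp add: pos_le_divide_eq)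
  have bnd: "0 \<le> x'$k * D \<and> x'$k * D \<le> y$k * s$k" for k
  proof (cases "k = i")
    case True thus ?thesis using comp t1 yi D le[of "x$i + t" i] by simp
  next
    case False
    show ?thesis
    proof (cases "k = j")
      case True thus ?thesis using comp t1 yi D le[of "x$j - t" j] False by simp
    next
      case F2: False
      thus ?thesis using comp f False by (simp add: feasible_def)
    qed
  qed
  have nn: "0 \<le> x'$k" for k using bnd[of k] D by (simp add: zero_le_mult_iff)
  have sum1: "(\<Sum>k\<in>UNIV. x'$k) = 1"
  proof -
    have "(\<Sum>k\<in>UNIV. x'$k) = (\<Sum>k\<in>UNIV. x$k + (t * (if k = i then 1 else 0) - t * (if k = j then 1 else 0)))"
      by (intro sum.cong) (auto simp: x'_def algebra_simps)
    also have "\<dots> = (\<Sum>k\<in>UNIV. x$k)"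
      by (simp add: sum.distrib sum_subtractf if_distrib[of "(*) t"] cong: if_cong)
    finally show ?thesis using f by (simp add: feasible_def)
  qed
  have le1: "x'$k \<le> 1" for k
  proof -
    have "x'$k \<le> (\<Sum>k\<in>UNIV. x'$k)" by (rule member_le_sum) (auto simp: nn)
    thus ?thesis using sum1 by simp
  qed
  have feas: "feasible s D x' y" using f bnd nn le1 sum1 by (simp add: feasible_def)
  have sub: "F2_tilde s D x' y \<subseteq> F2_tilde s D x y"
  proof
    fix k assume k: "k \<in> F2_tilde s D x' y"
    show "k \<in> F2_tilde s D x y"
    proof (cases "k = i \<or> k = j")
      case True thus ?thesis using i j by auto
    next
      case False thus ?thesis using k comp by (simp add: F2_tilde_def)
    qed
  qed
  have notin: "i \<notin> F2_tilde s D x' y \<or> j \<notin> F2_tilde s D x' y"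
  proof -
    have "(x$i + t) * D = s$i \<Longrightarrow> ?thesis" using comp yi by (simp add: F2_tilde_def)
    moreover have "(x$j - t) * D = s$j \<Longrightarrow> ?thesis" using comp yi ij by (simp add: F2_tilde_def)
    moreover have "x$i + t = 0 \<Longrightarrow> ?thesis" using comp yi by (simp add: F2_tilde_def)
    moreover have "x$j - t = 0 \<Longrightarrow> ?thesis" using comp yi ij by (simp add: F2_tilde_def)
    ultimately show ?thesis using t2 D by auto
  qed
  show ?thesis using feas sub notin i j by blast
qed


lemma in_hull:
  fixes s x y :: "real^'n" and D :: real
  assumes D: "D > 0"
  shows "feasible s D x y \<Longrightarrow> (x, y) \<in> convex hull (canonical_set s D)"
proof (induction "card (F2_tilde s D x y)" arbitrary: x rule: less_induct)
  case less
  show ?case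
  proof (cases "card (F2_tilde s D x y) \<le> 1")
    case True
    hence "(x, y) \<in> canonical_set s D" using less.prems by (simp add: canonical_set_def canonical_def)
    thus ?thesis by (rule hull_inc)
  next
    case False
    have "finite (F2_tilde s D x y)" by simp
    then obtain i j where i: "i \<in> F2_tilde s D x y" and j: "j \<in> F2_tilde s D x y" and ij: "i \<noteq> j"
      using False card_le_Suc0_iff_eq by (metis One_nat_def)
    have yi: "y$i = 1" "y$j = 1" using i j by (auto simp: F2_tilde_def open_facilities_def)
    have xi: "0 < x$i" "x$i < s$i / D" using i yi D by (auto simp: F2_tilde_def pos_less_divide_eq zero_less_mult_iff)
    have xj: "0 < x$j" "x$j < s$j / D" using j yi D by (auto simp: F2_tilde_def pos_less_divide_eq zero_less_mult_iff)
    define d :: "real^'n" where "d = (\<chi> k. (if k = i then 1 else 0) - (if k = j then 1 else 0))"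
    define b where "b = min (s$i / D - x$i) (x$j)"
    define a where "a = min (x$i) (s$j / D - x$j)"
    have a0: "a > 0" and b0: "b > 0" using xi xj by (auto simp: a_def b_def)
    have mb: "feasible s D (x + b *\<^sub>R d) y \<and> F2_tilde s D (x + b *\<^sub>R d) y \<subset> F2_tilde s D x y"
      unfolding d_def
      by (rule move[OF D less.prems i j ij]) (use xi xj in \<open>auto simp: b_def min_def\<close>)
    have ma: "feasible s D (x + (-a) *\<^sub>R d) y \<and> F2_tilde s D (x + (-a) *\<^sub>R d) y \<subset> F2_tilde s D x y"
      unfolding d_def
      by (rule move[OF D less.prems i j ij]) (use xi xj in \<open>auto simp: a_def min_def\<close>)
    have hb: "(x + b *\<^sub>R d, y) \<in> convex hull (canonical_set s D)"
      using mb less.hyps by (meson finite psubset_card_mono)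
    have ha: "(x + (-a) *\<^sub>R d, y) \<in> convex hull (canonical_set s D)"
      using ma less.hyps by (meson finite psubset_card_mono)
    define u where "u = b / (a + b)"
    define v where "v = a / (a + b)"
    have uv: "u \<ge> 0" "v \<ge> 0" "u + v = 1" using a0 b0 by (auto simp: u_def v_def add_divide_distrib[symmetric])
    have uava: "u * a = v * b" by (simp add: u_def v_def)
    have "u *\<^sub>R (x + (-a) *\<^sub>R d, y) + v *\<^sub>R (x + b *\<^sub>R d, y)
        = ((u + v) *\<^sub>R x + (v * b - u * a) *\<^sub>R d, (u + v) *\<^sub>R y)"
      by (simp add: algebra_simps)
    also have "\<dots> = (x, y)" using uv uava by simp
    finally have eq: "u *\<^sub>R (x + (-a) *\<^sub>R d, y) + v *\<^sub>R (x + b *\<^sub>R d, y) = (x, y)" .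
    have "u *\<^sub>R (x + (-a) *\<^sub>R d, y) + v *\<^sub>R (x + b *\<^sub>R d, y) \<in> convex hull (canonical_set s D)"
      by (rule convexD[OF convex_convex_hull ha hb uv])
    thus ?thesis using eq by simp
  qed
qed

theorem lemma2:
  fixes s x y :: "real^'n" and D :: real
  assumes "\<forall>i. s$i > 0" and "D > 0" and "feasible s D x y"
  shows "\<exists>lam. (\<forall>p\<in>canonical_set s D. lam p \<ge> 0) \<and>
              (\<Sum>p\<in>canonical_set s D. lam p) = 1 \<and>
              (x, y) = (\<Sum>p\<in>canonical_set s D. lam p *\<^sub>R p)"
proof -
  have "(x, y) \<in> convex hull (canonical_set s D)" using in_hull assms by blast
  thus ?thesis unfolding convex_hull_finite[OF canon_finite[OF assms(2)]] by auto
qed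

end
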